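(* Let $G=(V,E)$ be a circular arc graph which is not an interval graph, let $M=(C,\mathcal A)$ be a circular arc model of $G$, let $p$ be a point of $C$, let $A$ be the set of vertices whose arcs contain $p$, and $B=V\setminus A$. Let $G'=(V,E')$ with $E'=E\cup\{\{u',v'\}: u',v'\in B,\ u'\ne v'\}$, and let $\{I_1',\dots,I_b'\}$ be a box representation of $G'$ of dimension $b=\mathrm{box}(G')$. Let $I$ be an interval representation of the subgraph of $G$ induced on $B$, and let $I'$ be the extension of $I$ on $V$. Then $\mathcal B=\{I_1',\dots,I_b',I'\}$ is a box representation of $G$ and $|\mathcal B|\le 2\,\mathrm{box}(G)+1$.
   Context: A circular arc model of $G$ consists of a circle $C$ and arcs of $C$, one per vertex, such that two vertices are adjacent iff their arcs intersect. An interval graph is the intersection graph of a finite family of intervals of the real line; an interval representation assigns to each vertex $u$ an interval $[l_u,r_u]$ (non-degenerate). A box representation of dimension $k$ of $G=(V,E)$ is a family of $k$ interval graphs $I_1,\dots,I_k$ on vertex set $V$ with $E=E(I_1)\cap\cdots\cap E(I_k)$; $\mathrm{box}(G)$ is the minimum such $k$. Extension: if $I$ is an interval representation of an interval graph on vertex set $W\subseteq V$, with $l=\min_{u\in W} l_u$ and $r=\max_{u\in W} r_u$, the extension of $I$ on $V$ is the interval representation on $V$ assigning $[l_u,r_u]$ to each $u\in W$ and $[l,r]$ to each $u\in V\setminus W$ (so every vertex of $V\setminus W$ is adjacent to all other vertices). *)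

theory Defs
  imports Complex_Main
begin

definition all_pairs :: "'a set \<Rightarrow> 'a set set" where
  "all_pairs V = {{u, v} | u v. u \<in> V \<and> v \<in> V \<and> u \<noteq> v}"

definition graph :: "'a set \<Rightarrow> 'a set set \<Rightarrow> bool" where
  "graph V E \<longleftrightarrow> finite V \<and> E \<subseteq> all_pairs V"

definition interval_rep :: "'a set \<Rightarrow> ('a \<Rightarrow> real \<times> real) \<Rightarrow> bool" where
  "interval_rep W f \<longleftrightarrow> (\<forall>u\<in>W. fst (f u) < snd (f u))"

definition interval_edges :: "'a set \<Rightarrow> ('a \<Rightarrow> real \<times> real) \<Rightarrow> 'a set set" where
  "interval_edges W f = {{u, v} | u v. u \<in> W \<and> v \<in> W \<and> u \<noteq> v \<and>
      max (fst (f u)) (fst (f v)) \<le> min (snd (f u)) (snd (f v))}"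

definition is_interval_graph :: "'a set \<Rightarrow> 'a set set \<Rightarrow> bool" where
  "is_interval_graph V E \<longleftrightarrow> (\<exists>f. interval_rep V f \<and> E = interval_edges V f)"

definition box_rep :: "'a set \<Rightarrow> 'a set set \<Rightarrow> nat \<Rightarrow> (nat \<Rightarrow> 'a \<Rightarrow> real \<times> real) \<Rightarrow> bool" where
  "box_rep V E k Is \<longleftrightarrow> (\<forall>i<k. interval_rep V (Is i)) \<and>
      E = {e \<in> all_pairs V. \<forall>i<k. e \<in> interval_edges V (Is i)}"

definition boxicity :: "'a set \<Rightarrow> 'a set set \<Rightarrow> nat" where
  "boxicity V E = (LEAST k. \<exists>Is. box_rep V E k Is)"

definition extension :: "'a set \<Rightarrow> ('a \<Rightarrow> real \<times> real) \<Rightarrow> 'a \<Rightarrow> real \<times> real" where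
  "extension W f u = (if u \<in> W then f u else (Min ((\<lambda>w. fst (f w)) ` W), Max ((\<lambda>w. snd (f w)) ` W)))"

text \<open>Circle C modelled as [0,1) with wrap-around; an arc is given by a start point s \<in> [0,1)
  and a length 0 < len \<le> 1 and consists of the points reached going (counterclockwise)
  from s by at most len (closed arc).\<close>

definition arc_set :: "real \<times> real \<Rightarrow> real set" where
  "arc_set a = {x \<in> {0..<1}. frac (x - fst a) \<le> snd a}"

definition circular_arc_model :: "'a set \<Rightarrow> 'a set set \<Rightarrow> ('a \<Rightarrow> real \<times> real) \<Rightarrow> bool" where
  "circular_arc_model V E arc \<longleftrightarrow>
     (\<forall>u\<in>V. 0 \<le> fst (arc u) \<and> fst (arc u) < 1 \<and> 0 < snd (arc u) \<and> snd (arc u) \<le> 1) \<and>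
     (\<forall>u\<in>V. \<forall>v\<in>V. u \<noteq> v \<longrightarrow> ({u, v} \<in> E \<longleftrightarrow> arc_set (arc u) \<inter> arc_set (arc v) \<noteq> {}))"

end

theory Submission
  imports Defs
begin

lemma mem_ie: "{u,v} \<in> interval_edges W f \<longleftrightarrow> u\<in>W \<and> v\<in>W \<and> u\<noteq>v \<and>
   fst (f u) \<le> snd (f u) \<and> fst (f u) \<le> snd (f v) \<and> fst (f v) \<le> snd (f u) \<and> fst (f v) \<le> snd (f v)"
  unfolding interval_edges_def by (auto simp: doubleton_eq_iff)

lemma all_pairsE: "e \<in> all_pairs V \<Longrightarrow> (\<And>u v. e = {u,v} \<Longrightarrow> u\<in>V \<Longrightarrow> v\<in>V \<Longrightarrow> u\<noteq>v \<Longrightarrow> P) \<Longrightarrow> P"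
  unfolding all_pairs_def by blast

lemma mem_all_pairs: "{u,v} \<in> all_pairs V \<longleftrightarrow> u\<in>V \<and> v\<in>V \<and> u\<noteq>v"
  unfolding all_pairs_def by (auto simp: doubleton_eq_iff)

lemma box_exists:
  assumes "graph V E"
  shows "\<exists>k Is. box_rep V E k Is"
proof -
  define N where "N = all_pairs V - E"
  have fin: "finite V" using assms unfolding graph_def by auto
  have "all_pairs V \<subseteq> Pow V" unfolding all_pairs_def by auto
  hence "finite (all_pairs V)" using fin by (meson finite_Pow_iff finite_subset)
  hence "finite N" unfolding N_def by auto
  then obtain xs where xs: "set xs = N" using finite_list by blast
  define g where "g e w = (if w \<in> e then (if w = (SOME x. x \<in> e) then (0::real,1::real) else (2,3)) else (0,3))" for e :: "'a set" and w
  define Is where "Is j = g (xs ! j)" for j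
  have ir: "interval_rep V (Is j)" for j unfolding interval_rep_def Is_def g_def by auto
  have gv: "g n w = (0,1) \<or> g n w = (2,3) \<or> g n w = (0,3)" for n w unfolding g_def by auto
  have gout: "w \<notin> n \<Longrightarrow> g n w = (0,3)" for n w unfolding g_def by auto
  have key1: "e \<in> interval_edges V (g n)" if h: "e \<in> all_pairs V" "n \<in> N" "e \<noteq> n" for e n
  proof -
    obtain u v where e: "e = {u,v}" "u\<in>V" "v\<in>V" "u\<noteq>v" using h(1) by (auto elim: all_pairsE)
    obtain a b where n: "n = {a,b}" "a \<noteq> b" using h(2) unfolding N_def by (auto elim: all_pairsE)
    have "u \<notin> n \<or> v \<notin> n" using e n h(3) by auto
    moreover have "g n u = (0,1) \<or> g n u = (2,3) \<or> g n u = (0,3)" by (rule gv)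
    moreover have "g n v = (0,1) \<or> g n v = (2,3) \<or> g n v = (0,3)" by (rule gv)
    ultimately show ?thesis unfolding e(1) mem_ie using e(2-4) gout[of u n] gout[of v n] by auto
  qed
  have key2: "n \<notin> interval_edges V (g n)" if h: "n \<in> N" for n
  proof -
    obtain a b where n: "n = {a,b}" "a \<noteq> b" using h unfolding N_def by (auto elim: all_pairsE)
    define s where "s = (SOME x. x \<in> n)"
    have "s \<in> n" unfolding s_def by (rule someI[of _ a]) (simp add: n)
    have ga: "g n a = (if a = s then (0,1) else (2,3))" unfolding g_def s_def n(1) by simp
    have gb: "g n b = (if b = s then (0,1) else (2,3))" unfolding g_def s_def n(1) by simp
    have "{a,b} \<notin> interval_edges V (g n)" unfolding mem_ie ga gb using n \<open>s \<in> n\<close> by auto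
    thus ?thesis using n(1) by simp
  qed
  have "E = {e \<in> all_pairs V. \<forall>i<length xs. e \<in> interval_edges V (Is i)}"
  proof (intro equalityI subsetI)
    fix e assume e: "e \<in> E"
    hence "e \<in> all_pairs V" using assms unfolding graph_def by auto
    moreover have "e \<in> interval_edges V (Is i)" if "i < length xs" for i
    proof -
      have xi: "xs ! i \<in> N" using that xs nth_mem by blast
      hence "e \<noteq> xs ! i" using e unfolding N_def by blast
      thus ?thesis using key1[OF \<open>e \<in> all_pairs V\<close> xi] unfolding Is_def by simp
    qed
    ultimately show "e \<in> {e \<in> all_pairs V. \<forall>i<length xs. e \<in> interval_edges V (Is i)}" by auto
  next
    fix e assume e: "e \<in> {e \<in> all_pairs V. \<forall>i<length xs. e \<in> interval_edges V (Is i)}"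
    show "e \<in> E"
    proof (rule ccontr)
      assume "e \<notin> E"
      hence "e \<in> set xs" using xs e unfolding N_def by auto
      then obtain i where "i < length xs" "xs ! i = e" by (auto simp: in_set_conv_nth)
      thus False using e key2[of e] \<open>e \<in> set xs\<close> xs unfolding Is_def by force
    qed
  qed
  thus ?thesis using ir unfolding box_rep_def by blast
qed

lemma box_double:
  assumes fin: "finite V" "V \<noteq> {}"
    and br: "box_rep V E k Is"
    and clq: "\<And>u v. u\<in>V-B \<Longrightarrow> v\<in>V-B \<Longrightarrow> u\<noteq>v \<Longrightarrow> {u,v} \<in> E"
    and E': "E' = E \<union> {{u', v'} | u' v'. u' \<in> B \<and> v' \<in> B \<and> u' \<noteq> v'}"
    and BV: "B \<subseteq> V"
  shows "\<exists>Js. box_rep V E' (2*k) Js"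
proof -
  define m where "m i = Min ((\<lambda>w. fst (Is i w)) ` V)" for i
  define M where "M i = Max ((\<lambda>w. snd (Is i w)) ` V)" for i
  define L where "L i w = (if w \<in> B then (m i, snd (Is i w)) else Is i w)" for i w
  define R where "R i w = (if w \<in> B then (fst (Is i w), M i) else Is i w)" for i w
  define Js where "Js j = (if even j then L (j div 2) else R (j div 2))" for j
  have irI: "fst (Is i w) < snd (Is i w)" if "i < k" "w \<in> V" for i w
    using br that unfolding box_rep_def interval_rep_def by auto
  have mle: "m i \<le> fst (Is i w)" if "w \<in> V" for i w
    unfolding m_def using fin that by (intro Min_le) auto
  have Mge: "snd (Is i w) \<le> M i" if "w \<in> V" for i w
    unfolding M_def using fin that by (intro Max_ge) auto
  have irL: "fst (L i w) < snd (L i w)" if "i < k" "w \<in> V" for i w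
    using irI[OF that] mle[OF that(2), of i] unfolding L_def by auto
  have irR: "fst (R i w) < snd (R i w)" if "i < k" "w \<in> V" for i w
    using irI[OF that] Mge[OF that(2), of i] unfolding R_def by auto
  have irJ: "interval_rep V (Js j)" if "j < 2*k" for j
  proof -
    have "j div 2 < k" using that by auto
    thus ?thesis unfolding interval_rep_def Js_def using irL irR by auto
  qed
  have Esub: "E \<subseteq> all_pairs V" using br unfolding box_rep_def by auto
  have Eeq: "E = {e \<in> all_pairs V. \<forall>i<k. e \<in> interval_edges V (Is i)}" using br unfolding box_rep_def by auto
  have main: "{u,v} \<in> E' \<longleftrightarrow> (\<forall>i<k. {u,v} \<in> interval_edges V (L i) \<and> {u,v} \<in> interval_edges V (R i))"
    if uv: "u \<in> V" "v \<in> V" "u \<noteq> v" for u v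
  proof
    assume "{u,v} \<in> E'"
    then consider "{u,v} \<in> E" | "u \<in> B" "v \<in> B" unfolding E' by (auto simp: doubleton_eq_iff)
    thus "\<forall>i<k. {u,v} \<in> interval_edges V (L i) \<and> {u,v} \<in> interval_edges V (R i)"
    proof cases
      case 1
      show ?thesis
      proof (intro allI impI)
        fix i assume i: "i < k"
        have "{u,v} \<in> interval_edges V (Is i)" using 1 i Eeq by auto
        hence h: "fst (Is i u) \<le> snd (Is i v)" "fst (Is i v) \<le> snd (Is i u)" unfolding mem_ie by auto
        show "{u,v} \<in> interval_edges V (L i) \<and> {u,v} \<in> interval_edges V (R i)"
          unfolding mem_ie using uv h irI[OF i uv(1)] irI[OF i uv(2)] mle[OF uv(1), of i] mle[OF uv(2), of i] Mge[OF uv(1), of i] Mge[OF uv(2), of i]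
          unfolding L_def R_def by (auto split: if_splits)
      qed
    next
      case 2
      show ?thesis
      proof (intro allI impI)
        fix i assume i: "i < k"
        show "{u,v} \<in> interval_edges V (L i) \<and> {u,v} \<in> interval_edges V (R i)"
          unfolding mem_ie using uv 2 irI[OF i uv(1)] irI[OF i uv(2)] mle[OF uv(1), of i] mle[OF uv(2), of i] Mge[OF uv(1), of i] Mge[OF uv(2), of i]
          unfolding L_def R_def by auto
      qed
    qed
  next
    assume all: "\<forall>i<k. {u,v} \<in> interval_edges V (L i) \<and> {u,v} \<in> interval_edges V (R i)"
    show "{u,v} \<in> E'"
    proof (cases "u \<in> B \<and> v \<in> B")
      case True thus ?thesis unfolding E' using uv by blast
    next
      case False
      have "{u,v} \<in> interval_edges V (Is i)" if i: "i < k" for i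
      proof -
        have hL: "{u,v} \<in> interval_edges V (L i)" and hR: "{u,v} \<in> interval_edges V (R i)" using all i by auto
        show ?thesis
        proof (cases "u \<in> B")
          case True
          hence "v \<notin> B" using False by auto
          thus ?thesis using True hL hR irI[OF i uv(1)] irI[OF i uv(2)] mle[OF uv(1), of i] mle[OF uv(2), of i] Mge[OF uv(1), of i] Mge[OF uv(2), of i] uv unfolding mem_ie L_def R_def by auto
        next
          case uB: False
          show ?thesis
          proof (cases "v \<in> B")
            case True
            thus ?thesis using uB hL hR irI[OF i uv(1)] irI[OF i uv(2)] mle[OF uv(1), of i] mle[OF uv(2), of i] Mge[OF uv(1), of i] Mge[OF uv(2), of i] uv unfolding mem_ie L_def R_def by auto
          next
            case False
            thus ?thesis using uB hL uv unfolding mem_ie L_def by auto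
          qed
        qed
      qed
      hence "{u,v} \<in> E" using Eeq uv by (auto simp: mem_all_pairs)
      thus ?thesis unfolding E' by blast
    qed
  qed
  have "E' = {e \<in> all_pairs V. \<forall>j<2*k. e \<in> interval_edges V (Js j)}"
  proof (intro equalityI subsetI)
    fix e assume e: "e \<in> E'"
    have "e \<in> all_pairs V" using e Esub BV unfolding E' by (auto simp: mem_all_pairs)
    then obtain u v where uv: "e = {u,v}" "u \<in> V" "v \<in> V" "u \<noteq> v" by (auto elim: all_pairsE)
    have "\<forall>j<2*k. e \<in> interval_edges V (Js j)"
    proof (intro allI impI)
      fix j assume "j < 2*k"
      hence "j div 2 < k" by auto
      thus "e \<in> interval_edges V (Js j)" using main[OF uv(2-4)] e uv(1) unfolding Js_def by auto
    qed
    thus "e \<in> {e \<in> all_pairs V. \<forall>j<2*k. e \<in> interval_edges V (Js j)}" using \<open>e \<in> all_pairs V\<close> by blast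
  next
    fix e assume e: "e \<in> {e \<in> all_pairs V. \<forall>j<2*k. e \<in> interval_edges V (Js j)}"
    then obtain u v where uv: "e = {u,v}" "u \<in> V" "v \<in> V" "u \<noteq> v" by (auto elim: all_pairsE)
    have "\<forall>i<k. {u,v} \<in> interval_edges V (L i) \<and> {u,v} \<in> interval_edges V (R i)"
    proof (intro allI impI)
      fix i assume i: "i < k"
      have "2*i < 2*k" "2*i+1 < 2*k" using i by auto
      hence "e \<in> interval_edges V (Js (2*i))" "e \<in> interval_edges V (Js (2*i+1))" using e by blast+
      thus "{u,v} \<in> interval_edges V (L i) \<and> {u,v} \<in> interval_edges V (R i)" unfolding Js_def uv(1) by simp
    qed
    thus "e \<in> E'" using main[OF uv(2-4)] uv(1) by simp
  qed
  thus ?thesis using irJ unfolding box_rep_def by blast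
qed

theorem lemma7:
  fixes V :: "'a set" and E :: "'a set set" and arc :: "'a \<Rightarrow> real \<times> real" and p :: real
    and Is :: "nat \<Rightarrow> 'a \<Rightarrow> real \<times> real" and f :: "'a \<Rightarrow> real \<times> real"
  assumes "graph V E"
    and "\<not> is_interval_graph V E"
    and "circular_arc_model V E arc"
    and "p \<in> {0..<1}"
    and "A = {v \<in> V. p \<in> arc_set (arc v)}"
    and "B = V - A"
    and "E' = E \<union> {{u', v'} | u' v'. u' \<in> B \<and> v' \<in> B \<and> u' \<noteq> v'}"
    and "b = boxicity V E'"
    and "box_rep V E' b Is"
    and "interval_rep B f"
    and "interval_edges B f = {e \<in> E. e \<subseteq> B}"
  shows "box_rep V E (b + 1) (Is(b := extension B f)) \<and> b + 1 \<le> 2 * boxicity V E + 1"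
proof -
  note gr = assms(1) and nint = assms(2) and cam = assms(3) and Adef = assms(5) and Bdef = assms(6)
    and E'def = assms(7) and bdef = assms(8) and brIs = assms(9) and irf = assms(10) and ief = assms(11)
  have fin: "finite V" and Esub: "E \<subseteq> all_pairs V" using gr unfolding graph_def by auto
  have BV: "B \<subseteq> V" using Bdef by auto
  have finB: "finite B" using fin BV finite_subset by blast
  have Aclq: "{u,v} \<in> E" if "u \<in> V - B" "v \<in> V - B" "u \<noteq> v" for u v
  proof -
    have "p \<in> arc_set (arc u)" "p \<in> arc_set (arc v)" using that Adef Bdef by auto
    thus ?thesis using cam that unfolding circular_arc_model_def by blast
  qed
  have Bne: "B \<noteq> {}"
  proof
    assume B0: "B = {}"
    have "all_pairs V \<subseteq> E"
    proof
      fix e assume "e \<in> all_pairs V"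
      then obtain u v where "e = {u,v}" "u \<in> V" "v \<in> V" "u \<noteq> v" by (auto elim: all_pairsE)
      thus "e \<in> E" using Aclq B0 by auto
    qed
    hence EV: "E = all_pairs V" using Esub by auto
    have "interval_rep V (\<lambda>_. (0::real, 1))" unfolding interval_rep_def by auto
    moreover have "interval_edges V (\<lambda>_. (0::real, 1)) = all_pairs V"
      unfolding interval_edges_def all_pairs_def by auto
    ultimately have "is_interval_graph V E" unfolding is_interval_graph_def EV by blast
    thus False using nint by blast
  qed
  hence Vne: "V \<noteq> {}" using BV by auto
  define ext where "ext = extension B f"
  define Lm where "Lm = Min ((\<lambda>w. fst (f w)) ` B)"
  define Rm where "Rm = Max ((\<lambda>w. snd (f w)) ` B)"
  have extB: "ext w = f w" if "w \<in> B" for w using that unfolding ext_def extension_def by simp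
  have extN: "ext w = (Lm, Rm)" if "w \<notin> B" for w using that unfolding ext_def extension_def Lm_def Rm_def by simp
  have fir: "fst (f w) < snd (f w)" if "w \<in> B" for w using irf that unfolding interval_rep_def by auto
  have Lle: "Lm \<le> fst (f w)" if "w \<in> B" for w unfolding Lm_def using finB that by (intro Min_le) auto
  have Rge: "snd (f w) \<le> Rm" if "w \<in> B" for w unfolding Rm_def using finB that by (intro Max_ge) auto
  obtain w0 where w0: "w0 \<in> B" using Bne by auto
  have LR: "Lm < Rm" using Lle[OF w0] Rge[OF w0] fir[OF w0] by linarith
  have irext: "interval_rep V ext" unfolding interval_rep_def
  proof
    fix u assume "u \<in> V"
    show "fst (ext u) < snd (ext u)" by (cases "u \<in> B") (auto simp: extB extN fir LR)
  qed
  have E'eq: "E' = {e \<in> all_pairs V. \<forall>i<b. e \<in> interval_edges V (Is i)}"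
    and irIs: "\<forall>i<b. interval_rep V (Is i)" using brIs unfolding box_rep_def by auto
  have key: "e \<in> E \<longleftrightarrow> e \<in> E' \<and> e \<in> interval_edges V ext" if e: "e \<in> all_pairs V" for e
  proof -
    obtain u v where uv: "e = {u,v}" "u \<in> V" "v \<in> V" "u \<noteq> v" using e by (auto elim: all_pairsE)
    show ?thesis
    proof
      assume eE: "e \<in> E"
      have "{u,v} \<in> interval_edges V ext"
      proof (cases "u \<in> B \<and> v \<in> B")
        case True
        hence "{u,v} \<in> interval_edges B f" using ief eE uv by auto
        thus ?thesis using True uv unfolding mem_ie by (auto simp: extB)
      next
        case False
        then consider "u \<notin> B" "v \<in> B" | "u \<in> B" "v \<notin> B" | "u \<notin> B" "v \<notin> B" by blast
        thus ?thesis
        proof cases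
          case 1 thus ?thesis using uv Lle[of v] Rge[of v] fir[of v] LR unfolding mem_ie by (auto simp: extB extN)
        next
          case 2 thus ?thesis using uv Lle[of u] Rge[of u] fir[of u] LR unfolding mem_ie by (auto simp: extB extN)
        next
          case 3 thus ?thesis using uv LR unfolding mem_ie by (auto simp: extN)
        qed
      qed
      thus "e \<in> E' \<and> e \<in> interval_edges V ext" using eE uv E'def by auto
    next
      assume h: "e \<in> E' \<and> e \<in> interval_edges V ext"
      show "e \<in> E"
      proof (cases "e \<in> E")
        case False
        hence uvB: "u \<in> B" "v \<in> B" using h E'def uv by (auto simp: doubleton_eq_iff)
        have "{u,v} \<in> interval_edges V ext" using h uv by simp
        hence "{u,v} \<in> interval_edges B f" using uvB unfolding mem_ie by (auto simp: extB)
        thus ?thesis using ief uv by auto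
      qed
    qed
  qed
  have part1: "box_rep V E (b + 1) (Is(b := ext))"
    unfolding box_rep_def
  proof
    show "\<forall>i<b + 1. interval_rep V ((Is(b := ext)) i)" using irIs irext by auto
    show "E = {e \<in> all_pairs V. \<forall>i<b + 1. e \<in> interval_edges V ((Is(b := ext)) i)}"
    proof (intro equalityI subsetI)
      fix e assume eE: "e \<in> E"
      hence ea: "e \<in> all_pairs V" using Esub by auto
      hence "e \<in> E' \<and> e \<in> interval_edges V ext" using key eE by blast
      hence "\<forall>i<b + 1. e \<in> interval_edges V ((Is(b := ext)) i)" using E'eq by (auto simp: less_Suc_eq)
      thus "e \<in> {e \<in> all_pairs V. \<forall>i<b + 1. e \<in> interval_edges V ((Is(b := ext)) i)}" using ea by blast
    next
      fix e assume e: "e \<in> {e \<in> all_pairs V. \<forall>i<b + 1. e \<in> interval_edges V ((Is(b := ext)) i)}"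
      hence ea: "e \<in> all_pairs V" by blast
      have "\<forall>i<b. e \<in> interval_edges V (Is i)"
      proof (intro allI impI)
        fix i assume "i < b"
        thus "e \<in> interval_edges V (Is i)" using e by (metis (mono_tags, lifting) fun_upd_other less_Suc_eq mem_Collect_eq nat_neq_iff Suc_eq_plus1)
      qed
      moreover have "e \<in> interval_edges V ext" using e by auto
      ultimately show "e \<in> E" using key[OF ea] E'eq ea by blast
    qed
  qed
  obtain k0 J0 where "box_rep V E k0 J0" using box_exists[OF gr] by blast
  hence ex0: "\<exists>k. Ex (box_rep V E k)" by blast
  have "Ex (box_rep V E (LEAST k. Ex (box_rep V E k)))" using LeastI_ex[OF ex0] .
  hence "\<exists>Js. box_rep V E (boxicity V E) Js" unfolding boxicity_def .
  then obtain J where J: "box_rep V E (boxicity V E) J" by blast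
  have clq': "\<And>u v. u\<in>V-B \<Longrightarrow> v\<in>V-B \<Longrightarrow> u\<noteq>v \<Longrightarrow> {u,v} \<in> E" using Aclq by blast
  obtain Js where "box_rep V E' (2 * boxicity V E) Js"
    using box_double[OF fin Vne J clq' E'def BV] by blast
  hence "boxicity V E' \<le> 2 * boxicity V E" unfolding boxicity_def by (intro Least_le) blast
  thus ?thesis using part1 bdef unfolding ext_def by simp
qed

end
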